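(* Every special generalized crown has, as a retract, a special generalized crown that has no irreducible elements.
   Context: All posets are finite. A subset $Q\subseteq P$ (with induced order) is a retract of $P$ if there is an order-preserving map $f:P\to Q$ with $f(q)=q$ for all $q\in Q$. For $p,q\in P$, $p$ is a lower cover of $q$ (and $q$ an upper cover of $p$) if $p<q$ and there is no $r$ with $p<r<q$. An element is irreducible if it has exactly one upper cover or exactly one lower cover. Let $A=(a_0,\dots,a_{m-1})$ and $B=(b_0,\dots,b_{n-1})$ be disjoint antichains in a poset, each equipped with a cyclic ordering given by the indexing, with $m,n\ge 2$. The subposet $A\cup B$ is circulant with bipartition $\{A,B\}$ if every strict comparability in $A\cup B$ is between an element of $A$ and an element of $B$, and the map sending $a_i\mapsto a_{i+1 \bmod m}$ and $b_j\mapsto b_{j+1\bmod n}$ is order-preserving on $A\cup B$. A poset $P$ is a generalized crown with $k$-partition $\{A_0,\dots,A_{k-1}\}$ if $P$ is partitioned into cyclically ordered antichains $A_0,\dots,A_{k-1}$, each with at least two elements, such that for all $0\le i<j\le k-1$ the subposet $A_i\cup A_j$ is circulant with bipartition $\{A_i,A_j\}$. Such a generalized crown is special if it admits an automorphism whose orbits are exactly the sets $A_0,\dots,A_{k-1}$. *)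

theory Defs
  imports Main
begin

text \<open>A finite poset is a finite carrier set P together with a relation le that is a
partial order on P. Subsets carry the induced order (the same relation restricted).\<close>

definition poset_on :: "'a set \<Rightarrow> ('a \<Rightarrow> 'a \<Rightarrow> bool) \<Rightarrow> bool" where
  "poset_on P le \<longleftrightarrow> finite P \<and> (\<forall>x\<in>P. le x x)
     \<and> (\<forall>x\<in>P. \<forall>y\<in>P. le x y \<and> le y x \<longrightarrow> x = y)
     \<and> (\<forall>x\<in>P. \<forall>y\<in>P. \<forall>z\<in>P. le x y \<and> le y z \<longrightarrow> le x z)"

definition strict :: "('a \<Rightarrow> 'a \<Rightarrow> bool) \<Rightarrow> 'a \<Rightarrow> 'a \<Rightarrow> bool" where
  "strict le x y \<longleftrightarrow> le x y \<and> x \<noteq> y"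

definition order_preserving_on :: "'a set \<Rightarrow> ('a \<Rightarrow> 'a \<Rightarrow> bool) \<Rightarrow> ('a \<Rightarrow> 'a) \<Rightarrow> bool" where
  "order_preserving_on S le f \<longleftrightarrow> (\<forall>x\<in>S. \<forall>y\<in>S. le x y \<longrightarrow> le (f x) (f y))"

definition is_retract :: "'a set \<Rightarrow> ('a \<Rightarrow> 'a \<Rightarrow> bool) \<Rightarrow> 'a set \<Rightarrow> bool" where
  "is_retract P le Q \<longleftrightarrow> Q \<subseteq> P \<and>
     (\<exists>f. f ` P \<subseteq> Q \<and> order_preserving_on P le f \<and> (\<forall>q\<in>Q. f q = q))"

definition upper_cover :: "'a set \<Rightarrow> ('a \<Rightarrow> 'a \<Rightarrow> bool) \<Rightarrow> 'a \<Rightarrow> 'a \<Rightarrow> bool" where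
  "upper_cover P le p q \<longleftrightarrow> p \<in> P \<and> q \<in> P \<and> strict le p q \<and>
     \<not> (\<exists>r\<in>P. strict le p r \<and> strict le r q)"

definition irreducible :: "'a set \<Rightarrow> ('a \<Rightarrow> 'a \<Rightarrow> bool) \<Rightarrow> 'a \<Rightarrow> bool" where
  "irreducible P le x \<longleftrightarrow> x \<in> P \<and>
     (card {q. upper_cover P le x q} = 1 \<or> card {p. upper_cover P le p x} = 1)"

definition antichain :: "('a \<Rightarrow> 'a \<Rightarrow> bool) \<Rightarrow> 'a set \<Rightarrow> bool" where
  "antichain le A \<longleftrightarrow> (\<forall>x\<in>A. \<forall>y\<in>A. le x y \<longrightarrow> x = y)"

text \<open>A cyclically ordered antichain (a_0,...,a_{m-1}) is given by m and an injective
enumeration a of {..<m}. The cyclic shift on the union of two of them:\<close>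

definition cshift :: "nat \<Rightarrow> (nat \<Rightarrow> 'a) \<Rightarrow> nat \<Rightarrow> (nat \<Rightarrow> 'a) \<Rightarrow> 'a \<Rightarrow> 'a" where
  "cshift m a n b x = (if x \<in> a ` {..<m}
      then a (Suc (inv_into {..<m} a x) mod m)
      else b (Suc (inv_into {..<n} b x) mod n))"

definition circulant :: "('a \<Rightarrow> 'a \<Rightarrow> bool) \<Rightarrow> nat \<Rightarrow> (nat \<Rightarrow> 'a) \<Rightarrow> nat \<Rightarrow> (nat \<Rightarrow> 'a) \<Rightarrow> bool" where
  "circulant le m a n b \<longleftrightarrow>
     2 \<le> m \<and> 2 \<le> n \<and> inj_on a {..<m} \<and> inj_on b {..<n}
     \<and> antichain le (a ` {..<m}) \<and> antichain le (b ` {..<n})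
     \<and> a ` {..<m} \<inter> b ` {..<n} = {}
     \<and> (\<forall>x\<in>a ` {..<m} \<union> b ` {..<n}. \<forall>y\<in>a ` {..<m} \<union> b ` {..<n}. strict le x y \<longrightarrow>
          (x \<in> a ` {..<m} \<and> y \<in> b ` {..<n}) \<or> (x \<in> b ` {..<n} \<and> y \<in> a ` {..<m}))
     \<and> order_preserving_on (a ` {..<m} \<union> b ` {..<n}) le (cshift m a n b)"

text \<open>Generalized crown with k-partition A_i = e i ` {..<m i}, i < k.\<close>

definition gen_crown :: "'a set \<Rightarrow> ('a \<Rightarrow> 'a \<Rightarrow> bool) \<Rightarrow> nat \<Rightarrow> (nat \<Rightarrow> nat) \<Rightarrow> (nat \<Rightarrow> nat \<Rightarrow> 'a) \<Rightarrow> bool" where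
  "gen_crown P le k m e \<longleftrightarrow>
     (\<forall>i<k. 2 \<le> m i \<and> inj_on (e i) {..<m i} \<and> antichain le (e i ` {..<m i}))
     \<and> (\<forall>i<k. \<forall>j<k. i \<noteq> j \<longrightarrow> e i ` {..<m i} \<inter> e j ` {..<m j} = {})
     \<and> P = (\<Union>i<k. e i ` {..<m i})
     \<and> (\<forall>i j. i < j \<and> j < k \<longrightarrow> circulant le (m i) (e i) (m j) (e j))"

definition automorphism :: "'a set \<Rightarrow> ('a \<Rightarrow> 'a \<Rightarrow> bool) \<Rightarrow> ('a \<Rightarrow> 'a) \<Rightarrow> bool" where
  "automorphism P le f \<longleftrightarrow> bij_betw f P P \<and> (\<forall>x\<in>P. \<forall>y\<in>P. le x y \<longleftrightarrow> le (f x) (f y))"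

definition orbit :: "('a \<Rightarrow> 'a) \<Rightarrow> 'a \<Rightarrow> 'a set" where
  "orbit f x = {(f ^^ n) x | n. True}"

definition special_gen_crown :: "'a set \<Rightarrow> ('a \<Rightarrow> 'a \<Rightarrow> bool) \<Rightarrow> bool" where
  "special_gen_crown P le \<longleftrightarrow> (\<exists>k m e. gen_crown P le k m e \<and>
     (\<exists>f. automorphism P le f \<and> {orbit f x | x. x \<in> P} = {e i ` {..<m i} | i. i < k}))"

end

theory Submission
  imports Defs
begin
lemma poset_onD:
  assumes "poset_on P le"
  shows "finite P" and "\<forall>x\<in>P. le x x" and "\<forall>x\<in>P. \<forall>y\<in>P. le x y \<and> le y x \<longrightarrow> x = y"
    and "\<forall>x\<in>P. \<forall>y\<in>P. \<forall>z\<in>P. le x y \<and> le y z \<longrightarrow> le x z"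
  using assms unfolding poset_on_def by blast+

lemma aut_uc:
  assumes a: "automorphism P le g" and p: "p \<in> P" and q: "q \<in> P"
  shows "upper_cover P le (g p) (g q) \<longleftrightarrow> upper_cover P le p q"
proof -
  have inj: "inj_on g P" and im: "g ` P = P" using a unfolding automorphism_def bij_betw_def by auto
  have lei: "\<And>x y. x \<in> P \<Longrightarrow> y \<in> P \<Longrightarrow> le (g x) (g y) \<longleftrightarrow> le x y"
    using a unfolding automorphism_def by auto
  have gin: "\<And>x. x \<in> P \<Longrightarrow> g x \<in> P" using im by auto
  have st: "\<And>x y. x \<in> P \<Longrightarrow> y \<in> P \<Longrightarrow> strict le (g x) (g y) \<longleftrightarrow> strict le x y"
    unfolding strict_def using lei inj by (metis inj_on_eq_iff)
  have ex: "(\<exists>r\<in>P. strict le (g p) r \<and> strict le r (g q)) \<longleftrightarrow> (\<exists>r\<in>P. strict le p r \<and> strict le r q)"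
  proof
    assume "\<exists>r\<in>P. strict le (g p) r \<and> strict le r (g q)"
    then obtain r where r: "r \<in> P" "strict le (g p) r" "strict le r (g q)" by blast
    then obtain r' where "r' \<in> P" "r = g r'" using im by blast
    then show "\<exists>r\<in>P. strict le p r \<and> strict le r q" using r st p q by blast
  next
    assume "\<exists>r\<in>P. strict le p r \<and> strict le r q"
    then obtain r where r: "r \<in> P" "strict le p r" "strict le r q" by blast
    then show "\<exists>r\<in>P. strict le (g p) r \<and> strict le r (g q)" using st p q gin by blast
  qed
  show ?thesis unfolding upper_cover_def using ex st p q gin by blast
qed

lemma aut_card:
  assumes a: "automorphism P le g" and x: "x \<in> P"
  shows "card {q. upper_cover P le (g x) q} = card {q. upper_cover P le x q}"
    and "card {q. upper_cover P le q (g x)} = card {q. upper_cover P le q x}"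
proof -
  have inj: "inj_on g P" and im: "g ` P = P" using a unfolding automorphism_def bij_betw_def by auto
  have s1: "{q. upper_cover P le (g x) q} = g ` {q. upper_cover P le x q}"
  proof
    show "{q. upper_cover P le (g x) q} \<subseteq> g ` {q. upper_cover P le x q}"
    proof
      fix q assume "q \<in> {q. upper_cover P le (g x) q}"
      then have q: "upper_cover P le (g x) q" by simp
      then have "q \<in> P" unfolding upper_cover_def by simp
      then obtain q' where "q' \<in> P" "q = g q'" using im by blast
      then show "q \<in> g ` {q. upper_cover P le x q}" using q aut_uc[OF a x] by auto
    qed
  next
    show "g ` {q. upper_cover P le x q} \<subseteq> {q. upper_cover P le (g x) q}"
      using aut_uc[OF a x] unfolding upper_cover_def by auto
  qed
  have s2: "{q. upper_cover P le q (g x)} = g ` {q. upper_cover P le q x}"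
  proof
    show "{q. upper_cover P le q (g x)} \<subseteq> g ` {q. upper_cover P le q x}"
    proof
      fix q assume "q \<in> {q. upper_cover P le q (g x)}"
      then have q: "upper_cover P le q (g x)" by simp
      then have "q \<in> P" unfolding upper_cover_def by simp
      then obtain q' where "q' \<in> P" "q = g q'" using im by blast
      then show "q \<in> g ` {q. upper_cover P le q x}" using q aut_uc[OF a _ x] by auto
    qed
  next
    show "g ` {q. upper_cover P le q x} \<subseteq> {q. upper_cover P le q (g x)}"
      using aut_uc[OF a _ x] unfolding upper_cover_def by auto
  qed
  have sub1: "{q. upper_cover P le x q} \<subseteq> P" and sub2: "{q. upper_cover P le q x} \<subseteq> P"
    unfolding upper_cover_def by auto
  show "card {q. upper_cover P le (g x) q} = card {q. upper_cover P le x q}"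
    unfolding s1 using card_image inj_on_subset[OF inj sub1] by blast
  show "card {q. upper_cover P le q (g x)} = card {q. upper_cover P le q x}"
    unfolding s2 using card_image inj_on_subset[OF inj sub2] by blast
qed

lemma aut_pow:
  assumes a: "automorphism P le g"
  shows "automorphism P le (g ^^ n)"
proof (induction n)
  case 0
  then show ?case unfolding automorphism_def by (simp add: bij_betw_id)
next
  case (Suc n)
  have b: "bij_betw g P P" and lei: "\<And>x y. x \<in> P \<Longrightarrow> y \<in> P \<Longrightarrow> le x y \<longleftrightarrow> le (g x) (g y)"
    using a unfolding automorphism_def by auto
  have b2: "bij_betw (g^^n) P P" and lei2: "\<And>x y. x \<in> P \<Longrightarrow> y \<in> P \<Longrightarrow> le x y \<longleftrightarrow> le ((g^^n) x) ((g^^n) y)"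
    using Suc unfolding automorphism_def by auto
  have "bij_betw (g \<circ> g^^n) P P" using bij_betw_trans[OF b2 b] .
  moreover have "\<forall>x\<in>P. \<forall>y\<in>P. le x y \<longleftrightarrow> le ((g \<circ> g^^n) x) ((g \<circ> g^^n) y)"
  proof (intro ballI)
    fix x y assume x: "x \<in> P" and y: "y \<in> P"
    have "le x y \<longleftrightarrow> le ((g^^n) x) ((g^^n) y)" using lei2 x y by blast
    also have "\<dots> \<longleftrightarrow> le (g ((g^^n) x)) (g ((g^^n) y))"
      using lei bij_betw_apply[OF b2 x] bij_betw_apply[OF b2 y] by blast
    finally show "le x y \<longleftrightarrow> le ((g \<circ> g^^n) x) ((g \<circ> g^^n) y)" by simp
  qed
  ultimately show ?case unfolding automorphism_def by simp
qed

lemma cover_up: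
  assumes po: "poset_on P le"
  shows "x \<in> P \<Longrightarrow> z \<in> P \<Longrightarrow> strict le x z \<Longrightarrow> \<exists>w. upper_cover P le x w \<and> le w z"
proof (induction "card {w\<in>P. strict le x w \<and> le w z}" arbitrary: z rule: less_induct)
  case less
  have fin: "finite P" and refl: "\<forall>x\<in>P. le x x"
    and anti: "\<forall>x\<in>P. \<forall>y\<in>P. le x y \<and> le y x \<longrightarrow> x = y"
    and tr: "\<forall>x\<in>P. \<forall>y\<in>P. \<forall>z\<in>P. le x y \<and> le y z \<longrightarrow> le x z" using poset_onD[OF po] by blast+
  show ?case
  proof (cases "\<exists>r\<in>P. strict le x r \<and> strict le r z")
    case False
    then show ?thesis using less.prems refl unfolding upper_cover_def by blast
  next
    case True
    then obtain r where r: "r \<in> P" "strict le x r" "strict le r z" by blast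
    have sub: "{w\<in>P. strict le x w \<and> le w r} \<subset> {w\<in>P. strict le x w \<and> le w z}"
    proof
      show "{w\<in>P. strict le x w \<and> le w r} \<subseteq> {w\<in>P. strict le x w \<and> le w z}"
        using tr r less.prems unfolding strict_def by blast
      have "z \<notin> {w\<in>P. strict le x w \<and> le w r}" using anti r less.prems unfolding strict_def by blast
      moreover have "z \<in> {w\<in>P. strict le x w \<and> le w z}" using less.prems refl by blast
      ultimately show "{w\<in>P. strict le x w \<and> le w r} \<noteq> {w\<in>P. strict le x w \<and> le w z}" by blast
    qed
    have "card {w\<in>P. strict le x w \<and> le w r} < card {w\<in>P. strict le x w \<and> le w z}"
      using psubset_card_mono[OF _ sub] fin by auto
    from less.hyps[OF this less.prems(1) r(1) r(2)] obtain w where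
      w: "upper_cover P le x w" "le w r" by blast
    have "le w z" using tr w r less.prems unfolding upper_cover_def strict_def by blast
    then show ?thesis using w by blast
  qed
qed

lemma cover_down:
  assumes po: "poset_on P le"
  shows "x \<in> P \<Longrightarrow> z \<in> P \<Longrightarrow> strict le z x \<Longrightarrow> \<exists>w. upper_cover P le w x \<and> le z w"
proof (induction "card {w\<in>P. strict le w x \<and> le z w}" arbitrary: z rule: less_induct)
  case less
  have fin: "finite P" and refl: "\<forall>x\<in>P. le x x"
    and anti: "\<forall>x\<in>P. \<forall>y\<in>P. le x y \<and> le y x \<longrightarrow> x = y"
    and tr: "\<forall>x\<in>P. \<forall>y\<in>P. \<forall>z\<in>P. le x y \<and> le y z \<longrightarrow> le x z" using poset_onD[OF po] by blast+
  show ?case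
  proof (cases "\<exists>r\<in>P. strict le z r \<and> strict le r x")
    case False
    then show ?thesis using less.prems refl unfolding upper_cover_def by blast
  next
    case True
    then obtain r where r: "r \<in> P" "strict le z r" "strict le r x" by blast
    have sub: "{w\<in>P. strict le w x \<and> le r w} \<subset> {w\<in>P. strict le w x \<and> le z w}"
    proof
      show "{w\<in>P. strict le w x \<and> le r w} \<subseteq> {w\<in>P. strict le w x \<and> le z w}"
        using tr r less.prems unfolding strict_def by blast
      have "z \<notin> {w\<in>P. strict le w x \<and> le r w}" using anti r less.prems unfolding strict_def by blast
      moreover have "z \<in> {w\<in>P. strict le w x \<and> le z w}" using less.prems refl by blast
      ultimately show "{w\<in>P. strict le w x \<and> le r w} \<noteq> {w\<in>P. strict le w x \<and> le z w}" by blast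
    qed
    have "card {w\<in>P. strict le w x \<and> le r w} < card {w\<in>P. strict le w x \<and> le z w}"
      using psubset_card_mono[OF _ sub] fin by auto
    from less.hyps[OF this less.prems(1) r(1) r(3)] obtain w where
      w: "upper_cover P le w x" "le r w" by blast
    have "le z w" using tr w r less.prems unfolding upper_cover_def strict_def by blast
    then show ?thesis using w by blast
  qed
qed

lemma retract_remove:
  assumes po: "poset_on P le" and AP: "A \<subseteq> P" and ac: "antichain le A"
    and c: "\<forall>x\<in>A. \<exists>c\<in>P-A. (\<forall>z\<in>P. strict le x z \<longrightarrow> le c z) \<and> (\<forall>z\<in>P. strict le z x \<longrightarrow> le z c)"
  shows "is_retract P le (P - A)"
proof -
  have tr: "\<forall>x\<in>P. \<forall>y\<in>P. \<forall>z\<in>P. le x y \<and> le y z \<longrightarrow> le x z" using poset_onD[OF po] by blast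
  obtain h where h: "\<forall>x\<in>A. h x \<in> P-A \<and> (\<forall>z\<in>P. strict le x z \<longrightarrow> le (h x) z) \<and> (\<forall>z\<in>P. strict le z x \<longrightarrow> le z (h x))"
    using c by metis
  define f where "f = (\<lambda>x. if x \<in> A then h x else x)"
  have "f ` P \<subseteq> P - A" unfolding f_def using h by auto
  moreover have "\<forall>q\<in>P-A. f q = q" unfolding f_def by auto
  moreover have "order_preserving_on P le f"
    unfolding order_preserving_on_def
  proof (intro ballI impI)
    fix x y assume x: "x \<in> P" and y: "y \<in> P" and xy: "le x y"
    show "le (f x) (f y)"
    proof (cases "x \<in> A")
      case xA: True
      show ?thesis
      proof (cases "y \<in> A")
        case True
        then have "x = y" using ac xA xy unfolding antichain_def by blast
        moreover have "f x \<in> P" using h xA unfolding f_def by auto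
        ultimately show ?thesis using poset_onD(2)[OF po] by blast
      next
        case False
        then have "x \<noteq> y" using xA by blast
        then show ?thesis using h xA False y xy unfolding f_def strict_def by auto
      qed
    next
      case xA: False
      show ?thesis
      proof (cases "y \<in> A")
        case True
        then have "x \<noteq> y" using xA by blast
        then show ?thesis using h xA True x xy unfolding f_def strict_def by auto
      next
        case False
        then show ?thesis using xA xy unfolding f_def by auto
      qed
    qed
  qed
  ultimately show ?thesis unfolding is_retract_def by blast
qed

lemma retract_trans:
  assumes "is_retract P le Q" "is_retract Q le R"
  shows "is_retract P le R"
proof -
  obtain f where f: "f ` P \<subseteq> Q" "order_preserving_on P le f" "\<forall>q\<in>Q. f q = q" and QP: "Q \<subseteq> P"
    using assms(1) unfolding is_retract_def by blast
  obtain g where g: "g ` Q \<subseteq> R" "order_preserving_on Q le g" "\<forall>q\<in>R. g q = q" and RQ: "R \<subseteq> Q"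
    using assms(2) unfolding is_retract_def by blast
  have "(g \<circ> f) ` P \<subseteq> R" using f g by auto
  moreover have "order_preserving_on P le (g \<circ> f)"
    unfolding order_preserving_on_def
  proof (intro ballI impI)
    fix x y assume "x \<in> P" "y \<in> P" "le x y"
    then have "f x \<in> Q" "f y \<in> Q" "le (f x) (f y)" using f unfolding order_preserving_on_def by auto
    then show "le ((g \<circ> f) x) ((g \<circ> f) y)" using g unfolding order_preserving_on_def by auto
  qed
  moreover have "\<forall>q\<in>R. (g \<circ> f) q = q" using f g RQ by auto
  ultimately show ?thesis unfolding is_retract_def using QP RQ by blast
qed


lemma poset_sub:
  assumes po: "poset_on P le" and QP: "Q \<subseteq> P"
  shows "poset_on Q le"
  unfolding poset_on_def
proof (intro conjI)
  show "finite Q" using poset_onD(1)[OF po] QP finite_subset by blast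
  show "\<forall>x\<in>Q. le x x" using poset_onD(2)[OF po] QP by blast
  show "\<forall>x\<in>Q. \<forall>y\<in>Q. le x y \<and> le y x \<longrightarrow> x = y" using poset_onD(3)[OF po] QP by blast
  show "\<forall>x\<in>Q. \<forall>y\<in>Q. \<forall>z\<in>Q. le x y \<and> le y z \<longrightarrow> le x z" using poset_onD(4)[OF po] QP by blast
qed

lemma main:
  "finite P \<Longrightarrow> poset_on P le \<Longrightarrow> special_gen_crown P le \<Longrightarrow>
   \<exists>Q. is_retract P le Q \<and> special_gen_crown Q le \<and> (\<forall>x\<in>Q. \<not> irreducible Q le x)"
proof (induction "card P" arbitrary: P rule: less_induct)
  case less
  have po: "poset_on P le" using less.prems(2) .
  show ?case
  proof (cases "\<forall>x\<in>P. \<not> irreducible P le x")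
    case True
    have "is_retract P le P" unfolding is_retract_def order_preserving_on_def
      by (intro conjI exI[of _ id]) auto
    then show ?thesis using True less.prems by blast
  next
    case False
    then obtain x0 where x0: "irreducible P le x0" by blast
    have x0P: "x0 \<in> P" using x0 unfolding irreducible_def by blast
    from less.prems(3) obtain k m e \<sigma> where gc: "gen_crown P le k m e" and aut: "automorphism P le \<sigma>"
      and orb: "{orbit \<sigma> x | x. x \<in> P} = {e i ` {..<m i} | i. i < k}"
      unfolding special_gen_crown_def by (elim exE conjE) (rule that)
    define S where "S = (\<lambda>i. e i ` {..<m i})"
    have gc1: "\<forall>i<k. 2 \<le> m i \<and> inj_on (e i) {..<m i} \<and> antichain le (S i)"
      using gc unfolding gen_crown_def S_def by blast
    have disj: "\<forall>i<k. \<forall>j<k. i \<noteq> j \<longrightarrow> S i \<inter> S j = {}"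
      using gc unfolding gen_crown_def S_def by blast
    have Pu: "P = (\<Union>i<k. S i)"
      using gc unfolding gen_crown_def S_def by blast
    have circ: "\<forall>i j. i < j \<and> j < k \<longrightarrow> circulant le (m i) (e i) (m j) (e j)"
      using gc unfolding gen_crown_def by blast
    have orb0: "{orbit \<sigma> x | x. x \<in> P} = {S i | i. i < k}" using orb unfolding S_def by simp
    have orbS: "orbit \<sigma> x = S i" if i: "i < k" "x \<in> S i" for x i
    proof -
      have xP: "x \<in> P" using i Pu by blast
      then have "orbit \<sigma> x \<in> {S i | i. i < k}" using orb0 by blast
      then obtain j where j: "j < k" "orbit \<sigma> x = S j" by blast
      have "x = (\<sigma>^^0) x" by simp
      then have "x \<in> orbit \<sigma> x" unfolding orbit_def by blast
      then have "x \<in> S j" using j by simp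
      then show "orbit \<sigma> x = S i" using disj i j by blast
    qed
    have sigS: "\<sigma> x \<in> S i" if "i < k" "x \<in> S i" for x i
    proof -
      have "\<sigma> x = (\<sigma>^^1) x" by simp
      then have "\<sigma> x \<in> orbit \<sigma> x" unfolding orbit_def by blast
      then show ?thesis using orbS[OF that] by simp
    qed
    obtain i where i: "i < k" "x0 \<in> S i" using x0P Pu by blast
    define A where "A = S i"
    have AP: "A \<subseteq> P" using Pu i by (auto simp: A_def)
    have ac: "antichain le A" using gc1 i A_def by blast
    have cards: "card {q. upper_cover P le y q} = card {q. upper_cover P le x0 q}
       \<and> card {q. upper_cover P le q y} = card {q. upper_cover P le q x0}" if yA: "y \<in> A" for y
    proof -
      have "y \<in> orbit \<sigma> x0" using orbS[OF i] yA A_def by simp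
      then obtain n where n: "y = (\<sigma>^^n) x0" unfolding orbit_def by blast
      show ?thesis using aut_card[OF aut_pow[OF aut] x0P] n by simp
    qed
    have key: "\<forall>x\<in>A. \<exists>c\<in>P-A. (\<forall>z\<in>P. strict le x z \<longrightarrow> le c z) \<and> (\<forall>z\<in>P. strict le z x \<longrightarrow> le z c)"
    proof
      fix x assume xA: "x \<in> A"
      have xP: "x \<in> P" using xA AP by blast
      from x0 have "card {q. upper_cover P le x0 q} = 1 \<or> card {q. upper_cover P le q x0} = 1"
        unfolding irreducible_def by blast
      then show "\<exists>c\<in>P-A. (\<forall>z\<in>P. strict le x z \<longrightarrow> le c z) \<and> (\<forall>z\<in>P. strict le z x \<longrightarrow> le z c)"
      proof
        assume "card {q. upper_cover P le x0 q} = 1"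
        then have "card {q. upper_cover P le x q} = 1" using cards[OF xA] by simp
        then obtain c where c: "{q. upper_cover P le x q} = {c}" using card_1_singletonE by blast
        then have uc: "upper_cover P le x c" by auto
        have cP: "c \<in> P" using uc unfolding upper_cover_def by blast
        have "c \<notin> A" using uc ac xA unfolding upper_cover_def antichain_def strict_def by blast
        moreover have "\<forall>z\<in>P. strict le x z \<longrightarrow> le c z"
        proof (intro ballI impI)
          fix z assume "z \<in> P" "strict le x z"
          from cover_up[OF po xP this] obtain w where "upper_cover P le x w" "le w z" by blast
          then show "le c z" using c by auto
        qed
        moreover have "\<forall>z\<in>P. strict le z x \<longrightarrow> le z c"
          using uc poset_onD(4)[OF po] xP cP unfolding upper_cover_def strict_def by blast
        ultimately show ?thesis using cP by blast
      next
        assume "card {q. upper_cover P le q x0} = 1"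
        then have "card {q. upper_cover P le q x} = 1" using cards[OF xA] by simp
        then obtain c where c: "{q. upper_cover P le q x} = {c}" using card_1_singletonE by blast
        then have uc: "upper_cover P le c x" by auto
        have cP: "c \<in> P" using uc unfolding upper_cover_def by blast
        have "c \<notin> A" using uc ac xA unfolding upper_cover_def antichain_def strict_def by blast
        moreover have "\<forall>z\<in>P. strict le z x \<longrightarrow> le z c"
        proof (intro ballI impI)
          fix z assume "z \<in> P" "strict le z x"
          from cover_down[OF po xP this] obtain w where "upper_cover P le w x" "le z w" by blast
          then show "le z c" using c by auto
        qed
        moreover have "\<forall>z\<in>P. strict le x z \<longrightarrow> le c z"
          using uc poset_onD(4)[OF po] xP cP unfolding upper_cover_def strict_def by blast
        ultimately show ?thesis using cP by blast
      qed
    qed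
    have ret: "is_retract P le (P - A)" using retract_remove[OF po AP ac key] .
    define Q where "Q = P - A"
    define r where "r = (\<lambda>j::nat. if j < i then j else Suc j)"
    define k' where "k' = k - 1"
    define e' where "e' = (\<lambda>j. e (r j))"
    define m' where "m' = (\<lambda>j. m (r j))"
    have rk: "r j < k \<and> r j \<noteq> i" if "j < k'" for j using that i unfolding r_def k'_def by auto
    have rinj: "j = j'" if "r j = r j'" for j j' using that unfolding r_def by (auto split: if_splits)
    have rmono: "r j < r j'" if "j < j'" for j j' using that unfolding r_def by auto
    have rsurj: "\<exists>j<k'. r j = l" if l: "l < k" "l \<noteq> i" for l
    proof (cases "l < i")
      case True then show ?thesis using i by (intro exI[of _ l]) (auto simp: r_def k'_def)
    next
      case False then show ?thesis using l by (intro exI[of _ "l-1"]) (auto simp: r_def k'_def)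
    qed
    have Qu: "Q = (\<Union>j<k'. S (r j))"
    proof
      show "Q \<subseteq> (\<Union>j<k'. S (r j))"
      proof
        fix x assume "x \<in> Q"
        then have x: "x \<in> P" "x \<notin> A" unfolding Q_def by auto
        then obtain l where l: "l < k" "x \<in> S l" using Pu by blast
        then have "l \<noteq> i" using x A_def by blast
        then obtain j where "j < k'" "r j = l" using rsurj l by blast
        then show "x \<in> (\<Union>j<k'. S (r j))" using l by blast
      qed
      show "(\<Union>j<k'. S (r j)) \<subseteq> Q"
      proof
        fix x assume "x \<in> (\<Union>j<k'. S (r j))"
        then obtain j where j: "j < k'" "x \<in> S (r j)" by blast
        have "x \<in> P" using j rk Pu by blast
        moreover have "x \<notin> A" using j rk disj i A_def by blast
        ultimately show "x \<in> Q" unfolding Q_def by blast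
      qed
    qed
    have gcQ: "gen_crown Q le k' m' e'"
      unfolding gen_crown_def
    proof (intro conjI)
      show "\<forall>j<k'. 2 \<le> m' j \<and> inj_on (e' j) {..<m' j} \<and> antichain le (e' j ` {..<m' j})"
        using gc1 rk unfolding m'_def e'_def S_def by blast
      show "\<forall>ia<k'. \<forall>j<k'. ia \<noteq> j \<longrightarrow> e' ia ` {..<m' ia} \<inter> e' j ` {..<m' j} = {}"
      proof (intro allI impI)
        fix a b assume "a < k'" "b < k'" "a \<noteq> b"
        then have "r a < k" "r b < k" "r a \<noteq> r b" using rk rinj by blast+
        then show "e' a ` {..<m' a} \<inter> e' b ` {..<m' b} = {}"
          using disj unfolding m'_def e'_def S_def by blast
      qed
      show "Q = (\<Union>ia<k'. e' ia ` {..<m' ia})" using Qu unfolding m'_def e'_def S_def by simp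
      show "\<forall>ia j. ia < j \<and> j < k' \<longrightarrow> circulant le (m' ia) (e' ia) (m' j) (e' j)"
      proof (intro allI impI)
        fix a b assume "a < b \<and> b < k'"
        then have "r a < r b" "r b < k" using rk rmono by blast+
        then show "circulant le (m' a) (e' a) (m' b) (e' b)"
          using circ unfolding m'_def e'_def by blast
      qed
    qed
    have QP: "Q \<subseteq> P" unfolding Q_def by blast
    have sigQ: "\<sigma> x \<in> Q" if xQ: "x \<in> Q" for x
    proof -
      obtain j where j: "j < k'" "x \<in> S (r j)" using xQ Qu by blast
      then have "\<sigma> x \<in> S (r j)" using sigS rk by blast
      then show ?thesis using Qu j by blast
    qed
    have bP: "bij_betw \<sigma> P P" and leiff: "\<forall>x\<in>P. \<forall>y\<in>P. le x y \<longleftrightarrow> le (\<sigma> x) (\<sigma> y)"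
      using aut unfolding automorphism_def by blast+
    have autQ: "automorphism Q le \<sigma>"
      unfolding automorphism_def
    proof (intro conjI)
      show "\<forall>x\<in>Q. \<forall>y\<in>Q. le x y \<longleftrightarrow> le (\<sigma> x) (\<sigma> y)" using leiff QP by blast
      have inj: "inj_on \<sigma> Q" using bP QP inj_on_subset unfolding bij_betw_def by blast
      have "\<sigma> ` Q = Q"
      proof
        show "\<sigma> ` Q \<subseteq> Q" using sigQ by blast
        show "Q \<subseteq> \<sigma> ` Q"
        proof
          fix y assume y: "y \<in> Q"
          then have "y \<in> \<sigma> ` P" using bP QP unfolding bij_betw_def by blast
          then obtain z where z: "z \<in> P" "y = \<sigma> z" by blast
          have "z \<notin> A"
          proof
            assume "z \<in> A"
            then have "\<sigma> z \<in> A" using sigS i A_def by blast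
            then show False using y z unfolding Q_def by blast
          qed
          then show "y \<in> \<sigma> ` Q" using z unfolding Q_def by blast
        qed
      qed
      then show "bij_betw \<sigma> Q Q" using inj unfolding bij_betw_def by blast
    qed
    have orbQ: "{orbit \<sigma> x | x. x \<in> Q} = {e' j ` {..<m' j} | j. j < k'}"
    proof
      show "{orbit \<sigma> x | x. x \<in> Q} \<subseteq> {e' j ` {..<m' j} | j. j < k'}"
      proof
        fix Ob assume "Ob \<in> {orbit \<sigma> x | x. x \<in> Q}"
        then obtain x where x: "x \<in> Q" "Ob = orbit \<sigma> x" by blast
        obtain j where j: "j < k'" "x \<in> S (r j)" using x Qu by blast
        then have "Ob = S (r j)" using orbS rk x by blast
        then show "Ob \<in> {e' j ` {..<m' j} | j. j < k'}" using j unfolding S_def e'_def m'_def by blast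
      qed
      show "{e' j ` {..<m' j} | j. j < k'} \<subseteq> {orbit \<sigma> x | x. x \<in> Q}"
      proof
        fix Ob assume "Ob \<in> {e' j ` {..<m' j} | j. j < k'}"
        then obtain j where j: "j < k'" "Ob = S (r j)" unfolding S_def e'_def m'_def by blast
        have "2 \<le> m (r j)" using gc1 rk j by blast
        then have "e (r j) 0 \<in> S (r j)" unfolding S_def by auto
        then have "e (r j) 0 \<in> Q" "orbit \<sigma> (e (r j) 0) = Ob" using Qu j orbS rk by blast+
        then show "Ob \<in> {orbit \<sigma> x | x. x \<in> Q}" by blast
      qed
    qed
    have spQ: "special_gen_crown Q le"
      unfolding special_gen_crown_def using gcQ autQ orbQ by blast
    have "2 \<le> m i" using gc1 i by blast
    then have "e i 0 \<in> A" unfolding A_def S_def by auto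
    then have "Q \<subset> P" using AP unfolding Q_def by blast
    then have lt: "card Q < card P" using psubset_card_mono less.prems(1) by blast
    have poQ: "poset_on Q le" using poset_sub[OF po QP] .
    have fQ: "finite Q" using poset_onD(1)[OF poQ] .
    from less.hyps[OF lt fQ poQ spQ] obtain R where
      R: "is_retract Q le R" "special_gen_crown R le" "\<forall>x\<in>R. \<not> irreducible R le x" by blast
    have "is_retract P le R" using retract_trans[OF ret[folded Q_def] R(1)] .
    then show ?thesis using R by blast
  qed
qed

theorem lemma3p4:
  fixes P :: "'a set" and le :: "'a \<Rightarrow> 'a \<Rightarrow> bool"
  assumes "poset_on P le"
    and "special_gen_crown P le"
  shows "\<exists>Q. is_retract P le Q \<and> special_gen_crown Q le \<and> (\<forall>x\<in>Q. \<not> irreducible Q le x)"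
  using main[OF poset_onD(1)[OF assms(1)] assms] .

end
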